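(* Let $S:\mathcal{V}\times\mathcal{Y}\to\mathbb{R}$ be a surrogate loss such that $S(\cdot,y)$ is continuous for every $y\in\mathcal{Y}$, and suppose there is a continuous injective map $t:\mathcal{M}\to\mathcal{V}$ such that for every $q\in\operatorname{Prob}(\mathcal{Y})$, $t(\mu(q))$ is the unique minimizer of $v\mapsto s(v,q)$ over $\mathcal{V}$. Then there exists a strictly convex function $h:\mathcal{M}\to\mathbb{R}$, differentiable on $\mathcal{M}$ (with gradients taken within the affine hull of $\mathcal{M}$), such that $$\delta s(v,q)=D_h\big(\mu(q),t^{-1}(v)\big)\qquad\text{for all } v\in t(\mathcal{M}),\ q\in\operatorname{Prob}(\mathcal{Y}).$$
   Context: Let $\mathcal{Y}$ be a finite nonempty set, $\mathcal{H}$ a finite-dimensional real Euclidean space with inner product $\langle\cdot,\cdot\rangle$, and $\phi:\mathcal{Y}\to\mathcal{H}$ a map. $\operatorname{Prob}(\mathcal{Y})$ denotes the set of probability distributions on $\mathcal{Y}$; for $q\in\operatorname{Prob}(\mathcal{Y})$ let $\mu(q)=\sum_{y}q(y)\phi(y)$. The marginal polytope is $\mathcal{M}=\operatorname{hull}(\phi(\mathcal{Y}))=\{\mu(q):q\in\operatorname{Prob}(\mathcal{Y})\}$. A surrogate loss is a function $S:\mathcal{V}\times\mathcal{Y}\to\mathbb{R}$ where $\mathcal{V}$ is a finite-dimensional real vector space; $s(v,q)=\mathbb{E}_{Y\sim q}S(v,Y)$ and $\delta s(v,q)=s(v,q)-\inf_{v'\in\mathcal{V}}s(v',q)$. For a convex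 differentiable $h$ on a convex set, the Bregman divergence is $D_h(u',u)=h(u')-h(u)-\langle u'-u,\nabla h(u)\rangle$. *)

theory Defs
  imports "HOL-Analysis.Analysis"
begin

definition prob_dist :: "('y::finite \<Rightarrow> real) \<Rightarrow> bool" where
  "prob_dist q \<longleftrightarrow> (\<forall>y. 0 \<le> q y) \<and> (\<Sum>y\<in>UNIV. q y) = 1"

definition mean_emb :: "('y::finite \<Rightarrow> 'h::real_vector) \<Rightarrow> ('y \<Rightarrow> real) \<Rightarrow> 'h" where
  "mean_emb \<phi> q = (\<Sum>y\<in>UNIV. q y *\<^sub>R \<phi> y)"

definition marginal_polytope :: "('y \<Rightarrow> 'h::real_vector) \<Rightarrow> 'h set" where
  "marginal_polytope \<phi> = convex hull (range \<phi>)"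

definition exp_loss :: "('v \<Rightarrow> 'y::finite \<Rightarrow> real) \<Rightarrow> 'v \<Rightarrow> ('y \<Rightarrow> real) \<Rightarrow> real" where
  "exp_loss S v q = (\<Sum>y\<in>UNIV. q y * S v y)"

definition regret :: "('v \<Rightarrow> 'y::finite \<Rightarrow> real) \<Rightarrow> 'v \<Rightarrow> ('y \<Rightarrow> real) \<Rightarrow> real" where
  "regret S v q = exp_loss S v q - (INF v'. exp_loss S v' q)"

definition strict_convex_on :: "'a::real_vector set \<Rightarrow> ('a \<Rightarrow> real) \<Rightarrow> bool" where
  "strict_convex_on A f \<longleftrightarrow> convex A \<and>
     (\<forall>x\<in>A. \<forall>y\<in>A. x \<noteq> y \<longrightarrow> (\<forall>u::real. 0 < u \<and> u < 1 \<longrightarrow>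
        f (u *\<^sub>R x + (1 - u) *\<^sub>R y) < u * f x + (1 - u) * f y))"

definition bregman :: "('a::real_inner \<Rightarrow> real) \<Rightarrow> ('a \<Rightarrow> 'a) \<Rightarrow> 'a \<Rightarrow> 'a \<Rightarrow> real" where
  "bregman h g u' u = h u' - h u - inner (u' - u) (g u)"

end

theory Submission
  imports Defs
begin



lemma exp_loss_lin:
  "exp_loss S v (\<lambda>y. p y + c * r y) = exp_loss S v p + c * exp_loss S v r"
  unfolding exp_loss_def by (simp add: algebra_simps sum.distrib sum_distrib_left)

lemma exp_loss_diff:
  "exp_loss S v (\<lambda>y. p y - r y) = exp_loss S v p - exp_loss S v r"
  unfolding exp_loss_def by (simp add: algebra_simps sum_subtractf)

lemma mean_lin:
  "mean_emb \<phi> (\<lambda>y. p y + c * r y) = mean_emb \<phi> p + c *\<^sub>R mean_emb \<phi> r"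
  unfolding mean_emb_def by (simp add: algebra_simps sum.distrib scaleR_sum_right)

lemma M_eq: fixes \<phi> :: "'y::finite \<Rightarrow> 'h::real_vector" shows "marginal_polytope \<phi> = mean_emb \<phi> ` {q. prob_dist q}"
proof
  show "mean_emb \<phi> ` {q. prob_dist q} \<subseteq> marginal_polytope \<phi>"
  proof
    fix m assume "m \<in> mean_emb \<phi> ` {q. prob_dist q}"
    then obtain q where q: "prob_dist q" "m = mean_emb \<phi> q" by auto
    show "m \<in> marginal_polytope \<phi>"
      unfolding q(2) mean_emb_def marginal_polytope_def
      by (rule convex_sum) (use q(1) in \<open>auto simp: prob_dist_def hull_subset[THEN subsetD]\<close>)
  qed
  show "marginal_polytope \<phi> \<subseteq> mean_emb \<phi> ` {q. prob_dist q}"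
    unfolding marginal_polytope_def
  proof (rule hull_minimal)
    show "range \<phi> \<subseteq> mean_emb \<phi> ` {q. prob_dist q}"
    proof
      fix x assume "x \<in> range \<phi>"
      then obtain y where y: "x = \<phi> y" by auto
      have "prob_dist (\<lambda>z. if z = y then 1 else 0)" by (simp add: prob_dist_def)
      moreover have "mean_emb \<phi> (\<lambda>z. if z = y then 1 else 0) = x"
      proof -
        have "(\<lambda>z. (if z = y then 1 else 0) *\<^sub>R \<phi> z) = (\<lambda>z. if z = y then \<phi> y else 0)" (is "_ = ?r") by auto
        then show ?thesis unfolding mean_emb_def y by (simp only:) simp
      qed
      ultimately show "x \<in> mean_emb \<phi> ` {q. prob_dist q}" by (metis (mono_tags) image_eqI mem_Collect_eq)
    qed
    show "convex (mean_emb \<phi> ` {q. prob_dist q})"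
      unfolding convex_def
    proof (clarsimp)
      fix q1 q2 :: "'y \<Rightarrow> real" and u v :: real
      assume h: "prob_dist q1" "prob_dist q2" "0 \<le> u" "0 \<le> v" "u + v = 1"
      let ?q = "\<lambda>y. u * q1 y + v * q2 y"
      have pd: "prob_dist ?q" using h
        by (simp add: prob_dist_def sum.distrib sum_distrib_left[symmetric])
      have e: "u *\<^sub>R mean_emb \<phi> q1 + v *\<^sub>R mean_emb \<phi> q2 = mean_emb \<phi> ?q"
        by (simp add: mean_emb_def algebra_simps sum.distrib scaleR_sum_right)
      show "u *\<^sub>R mean_emb \<phi> q1 + v *\<^sub>R mean_emb \<phi> q2 \<in> mean_emb \<phi> ` Collect prob_dist"
        by (rule image_eqI[where f="mean_emb \<phi>" and x="?q", OF e]) (simp add: pd)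
    qed
  qed
qed




locale setting =
  fixes \<phi> :: "'y::finite \<Rightarrow> 'h::euclidean_space"
    and S :: "'v::euclidean_space \<Rightarrow> 'y \<Rightarrow> real"
    and t :: "'h \<Rightarrow> 'v"
  assumes S_cont: "\<And>y. continuous_on UNIV (\<lambda>v. S v y)"
    and t_cont: "continuous_on (marginal_polytope \<phi>) t"
    and t_inj: "inj_on t (marginal_polytope \<phi>)"
    and t_min: "\<And>q v. prob_dist q \<Longrightarrow> v \<noteq> t (mean_emb \<phi> q) \<Longrightarrow>
                  exp_loss S (t (mean_emb \<phi> q)) q < exp_loss S v q"
begin

lemma opt: "prob_dist p \<Longrightarrow> exp_loss S (t (mean_emb \<phi> p)) p \<le> exp_loss S v p"
  using t_min[of p v] by (cases "v = t (mean_emb \<phi> p)") auto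

lemma core:
  assumes q0: "prob_dist q0" and q1: "prob_dist q1"
    and r0: "\<And>y. \<bar>r y\<bar> \<le> q0 y" and r1: "\<And>y. \<bar>r y\<bar> \<le> q1 y"
    and rs: "sum r UNIV = 0" and rm: "mean_emb \<phi> r = 0"
  shows "exp_loss S (t (mean_emb \<phi> q0)) r = exp_loss S (t (mean_emb \<phi> q1)) r"
proof -
  define d where "d = (\<lambda>y. q1 y - q0 y)"
  define X where "X = exp_loss S (t (mean_emb \<phi> q0)) r - exp_loss S (t (mean_emb \<phi> q1)) r"
  define C where "C = exp_loss S (t (mean_emb \<phi> q0)) d - exp_loss S (t (mean_emb \<phi> q1)) d"
  have bound: "2 * \<bar>X\<bar> \<le> C / real n" if n: "n > 0" for n :: nat
  proof -
    define p where "p i = (\<lambda>y. q0 y + (real i / real n) * d y)" for i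
    define A where "A i = t (mean_emb \<phi> (p i))" for i
    define x where "x i = exp_loss S (A i) r" for i
    define z where "z i = exp_loss S (A i) d" for i
    have pabs: "\<bar>r y\<bar> \<le> p i y" if "i \<le> n" for i y
    proof -
      have a: "0 \<le> real i / real n" "real i / real n \<le> 1" using that n by auto
      have "p i y = (1 - real i / real n) * q0 y + (real i / real n) * q1 y"
        using n by (simp add: p_def d_def field_simps)
      also have "\<dots> \<ge> (1 - real i / real n) * \<bar>r y\<bar> + (real i / real n) * \<bar>r y\<bar>"
        using a r0[of y] r1[of y] by (intro add_mono mult_left_mono) auto
      finally show ?thesis by (simp add: algebra_simps)
    qed
    have psum: "sum (p i) UNIV = 1" for i
    proof -
      have "sum (p i) UNIV = sum q0 UNIV + (real i / real n) * (sum q1 UNIV - sum q0 UNIV)"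
        unfolding p_def d_def sum.distrib sum_distrib_left[symmetric] sum_subtractf by (rule refl)
      then show ?thesis using q0 q1 by (simp add: prob_dist_def)
    qed
    have ppert: "prob_dist (\<lambda>y. p i y + s * r y)" if "i \<le> n" "\<bar>s\<bar> \<le> 1" for i s
    proof -
      have "0 \<le> p i y + s * r y" for y
      proof -
        have "\<bar>s * r y\<bar> \<le> \<bar>r y\<bar>" using that(2)
          by (simp add: abs_mult mult_left_le_one_le)
        then show ?thesis using pabs[OF that(1), of y] by linarith
      qed
      moreover have "(\<Sum>y\<in>UNIV. p i y + s * r y) = 1" using psum[of i] rs
        by (simp add: sum.distrib sum_distrib_left[symmetric])
      ultimately show ?thesis by (simp add: prob_dist_def)
    qed
    have pmean: "mean_emb \<phi> (\<lambda>y. p i y + s * r y) = mean_emb \<phi> (p i)" for i s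
      using mean_lin[of \<phi> "p i" s r] rm by simp
    have key: "\<bar>x i - x j\<bar> \<le> exp_loss S (A j) (p i) - exp_loss S (A i) (p i)" if "i \<le> n" for i j
    proof -
      have "exp_loss S (A i) (\<lambda>y. p i y + s * r y) \<le> exp_loss S (A j) (\<lambda>y. p i y + s * r y)"
        if "\<bar>s\<bar> \<le> 1" for s
        using opt[OF ppert[OF \<open>i \<le> n\<close> that], of "A j"] pmean[of i s] by (simp add: A_def)
      from this[of 1] this[of "-1"] show ?thesis unfolding exp_loss_lin x_def by (simp add: abs_le_iff)
    qed
    have plin: "exp_loss S v (p i) = exp_loss S v q0 + (real i / real n) * exp_loss S v d" for v i
      unfolding p_def exp_loss_lin by (rule refl)
    have step: "2 * \<bar>x i - x (Suc i)\<bar> \<le> (z i - z (Suc i)) / real n" if "i < n" for i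
    proof -
      have k1: "\<bar>x i - x (Suc i)\<bar> \<le> exp_loss S (A (Suc i)) (p i) - exp_loss S (A i) (p i)"
        using key[of i "Suc i"] that by simp
      have k2: "\<bar>x (Suc i) - x i\<bar> \<le> exp_loss S (A i) (p (Suc i)) - exp_loss S (A (Suc i)) (p (Suc i))"
        using key[of "Suc i" i] that by simp
      have "exp_loss S (A (Suc i)) (p i) - exp_loss S (A i) (p i)
          + (exp_loss S (A i) (p (Suc i)) - exp_loss S (A (Suc i)) (p (Suc i)))
          = (z i - z (Suc i)) / real n"
        using n by (simp add: plin z_def field_simps)
      then show ?thesis using k1 k2 by (simp add: abs_minus_commute)
    qed
    have tel: "\<bar>x 0 - x m\<bar> \<le> (\<Sum>i<m. \<bar>x i - x (Suc i)\<bar>)" for m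
    proof (induction m)
      case 0 then show ?case by simp
    next
      case (Suc m)
      have "\<bar>x 0 - x (Suc m)\<bar> \<le> \<bar>x 0 - x m\<bar> + \<bar>x m - x (Suc m)\<bar>"
        using abs_triangle_ineq[of "x 0 - x m" "x m - x (Suc m)"] by simp
      then show ?case using Suc by simp
    qed
    have "2 * \<bar>x 0 - x n\<bar> \<le> (\<Sum>i<n. 2 * \<bar>x i - x (Suc i)\<bar>)"
      using tel[of n] by (simp add: sum_distrib_left[symmetric])
    also have "\<dots> \<le> (\<Sum>i<n. (z i - z (Suc i)) / real n)"
      by (rule sum_mono) (use step in auto)
    also have "\<dots> = (z 0 - z n) / real n"
      by (simp add: sum_divide_distrib[symmetric] sum_lessThan_telescope')
    finally have "2 * \<bar>x 0 - x n\<bar> \<le> (z 0 - z n) / real n" .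
    moreover have "p 0 = q0" by (simp add: p_def)
    moreover have "p n = q1" using n by (simp add: p_def d_def)
    ultimately show ?thesis by (simp add: x_def z_def A_def X_def C_def)
  qed
  have "X = 0"
  proof (rule ccontr)
    assume "X \<noteq> 0"
    then have pos: "2 * \<bar>X\<bar> > 0" by simp
    obtain n :: nat where nC: "real n > C / (2 * \<bar>X\<bar>)" using reals_Archimedean2 by blast
    have "C / (2 * \<bar>X\<bar>) < real (Suc n)" using nC by simp
    then have "C < 2 * \<bar>X\<bar> * real (Suc n)" using pos by (simp add: divide_less_eq mult.commute)
    then have "C / real (Suc n) < 2 * \<bar>X\<bar>" by (simp add: divide_less_eq)
    with bound[of "Suc n"] show False by simp
  qed
  then show ?thesis by (simp add: X_def)
qed

end



context setting begin

lemma exp_loss_scale: "exp_loss S v (\<lambda>y. c * r y) = c * exp_loss S v r"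
  unfolding exp_loss_def by (simp add: sum_distrib_left algebra_simps)

lemma interior:
  assumes q0: "prob_dist q0" and q1: "prob_dist q1"
    and p0: "\<And>y. q0 y > 0" and p1: "\<And>y. q1 y > 0"
    and rs: "sum r UNIV = 0" and rm: "mean_emb \<phi> r = 0"
  shows "exp_loss S (t (mean_emb \<phi> q0)) r = exp_loss S (t (mean_emb \<phi> q1)) r"
proof -
  define \<delta> where "\<delta> = Min (range q0 \<union> range q1)"
  have \<delta>pos: "\<delta> > 0" unfolding \<delta>_def using p0 p1 by auto
  have \<delta>0: "\<delta> \<le> q0 y" and \<delta>1: "\<delta> \<le> q1 y" for y unfolding \<delta>_def by auto
  define c where "c = \<delta> / (1 + (\<Sum>y\<in>UNIV. \<bar>r y\<bar>))"
  have sa: "0 \<le> (\<Sum>y\<in>UNIV. \<bar>r y\<bar>)" by (simp add: sum_nonneg)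
  have cpos: "c > 0" unfolding c_def using \<delta>pos sa by (intro divide_pos_pos; linarith)
  have rb: "\<bar>c * r y\<bar> \<le> \<delta>" for y
  proof -
    have ry: "\<bar>r y\<bar> \<le> (\<Sum>y\<in>UNIV. \<bar>r y\<bar>)"
      by (rule member_le_sum) auto
    have "\<bar>c * r y\<bar> = \<delta> * (\<bar>r y\<bar> / (1 + (\<Sum>y\<in>UNIV. \<bar>r y\<bar>)))"
      unfolding c_def using \<delta>pos sa by (simp add: abs_mult)
    also have "\<dots> \<le> \<delta> * 1"
      using ry sa \<delta>pos by (intro mult_left_mono) auto
    finally show ?thesis by simp
  qed
  have "exp_loss S (t (mean_emb \<phi> q0)) (\<lambda>y. c * r y) = exp_loss S (t (mean_emb \<phi> q1)) (\<lambda>y. c * r y)"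
  proof (rule core[OF q0 q1])
    show "\<bar>c * r y\<bar> \<le> q0 y" for y using rb[of y] \<delta>0[of y] by linarith
    show "\<bar>c * r y\<bar> \<le> q1 y" for y using rb[of y] \<delta>1[of y] by linarith
    show "(\<Sum>y\<in>UNIV. c * r y) = 0" using rs by (simp add: sum_distrib_left[symmetric])
    have "mean_emb \<phi> (\<lambda>y. c * r y) = c *\<^sub>R mean_emb \<phi> r"
      unfolding mean_emb_def scaleR_sum_right scaleR_scaleR by (rule refl)
    then show "mean_emb \<phi> (\<lambda>y. c * r y) = 0" using rm by simp
  qed
  then show ?thesis using cpos unfolding exp_loss_scale by simp
qed

definition unif :: "'y \<Rightarrow> real" where "unif = (\<lambda>y. 1 / real CARD('y))"

lemma unif_prob: "prob_dist unif" and unif_pos: "unif y > 0"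
  by (auto simp: unif_def prob_dist_def)

lemma cont_loss: "continuous_on (marginal_polytope \<phi>) (\<lambda>m. exp_loss S (t m) r)"
proof -
  have "continuous_on (marginal_polytope \<phi>) (\<lambda>m. S (t m) y)" for y
    by (rule continuous_on_compose2[OF S_cont t_cont]) auto
  then show ?thesis unfolding exp_loss_def
    by (intro continuous_on_sum continuous_on_mult continuous_on_const)
qed

lemma factF0:
  assumes u: "u \<in> marginal_polytope \<phi>"
    and rs: "sum r UNIV = 0" and rm: "mean_emb \<phi> r = 0"
  shows "exp_loss S (t u) r = exp_loss S (t (mean_emb \<phi> unif)) r"
proof -
  obtain q where q: "prob_dist q" "u = mean_emb \<phi> q" using u unfolding M_eq by auto
  define w0 where "w0 = mean_emb \<phi> unif"
  define f where "f m = exp_loss S (t m) r" for m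
  define \<gamma> where "\<gamma> s = (1 - s) *\<^sub>R u + s *\<^sub>R w0" for s :: real
  have w0M: "w0 \<in> marginal_polytope \<phi>" unfolding w0_def M_eq using unif_prob by auto
  have conv: "convex (marginal_polytope \<phi>)" unfolding marginal_polytope_def by simp
  have \<gamma>M: "\<gamma> ` {0..1} \<subseteq> marginal_polytope \<phi>"
    using convexD_alt[OF conv u w0M] unfolding \<gamma>_def by (auto simp: algebra_simps)
  have c1: "continuous_on {0..1} (f \<circ> \<gamma>)"
  proof (rule continuous_on_compose)
    show "continuous_on {0..1} \<gamma>" unfolding \<gamma>_def by (intro continuous_intros)
    show "continuous_on (\<gamma> ` {0..1}) f"
      using continuous_on_subset[OF cont_loss \<gamma>M] unfolding f_def .
  qed
  moreover have c2: "(f \<circ> \<gamma>) s = f w0" if "s \<in> {0<..(1::real)}" for s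
  proof -
    define qs where "qs y = (1 - s) * q y + s * unif y" for y
    have "qs y > 0" for y
    proof -
      have "(1 - s) * q y \<ge> 0" using that q(1) by (auto simp: prob_dist_def)
      moreover have "s * unif y > 0" using that unif_pos[of y] by auto
      ultimately show ?thesis unfolding qs_def by linarith
    qed
    moreover have "prob_dist qs"
    proof -
      have "sum qs UNIV = (1 - s) * sum q UNIV + s * sum unif UNIV"
        unfolding qs_def by (simp add: sum.distrib sum_distrib_left)
      then show ?thesis using q(1) unif_prob \<open>\<And>y. qs y > 0\<close> unfolding prob_dist_def
        by (auto intro: less_imp_le)
    qed
    moreover have "\<gamma> s = mean_emb \<phi> qs"
      unfolding \<gamma>_def q(2) w0_def qs_def mean_emb_def scaleR_add_left sum.distrib scaleR_sum_right scaleR_scaleR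
      by (rule refl)
    ultimately show ?thesis
      using interior[of qs unif, OF _ unif_prob _ unif_pos rs rm] unfolding f_def w0_def o_def
      by presburger
  qed
  have "(f \<circ> \<gamma>) 0 = f w0"
  proof (rule continuous_constant_on_closure[of "{0<..(1::real)}" "f \<circ> \<gamma>" "f w0" 0])
    show "continuous_on (closure {0<..(1::real)}) (f \<circ> \<gamma>)" using c1 by simp
    show "(f \<circ> \<gamma>) x = f w0" if "x \<in> {0<..(1::real)}" for x using c2 that .
    show "(0::real) \<in> closure {0<..(1::real)}" by simp
  qed
  then show ?thesis by (simp add: f_def \<gamma>_def w0_def)
qed

lemma factF:
  assumes "u \<in> marginal_polytope \<phi>" "w \<in> marginal_polytope \<phi>"
    and "sum r UNIV = 0" and "mean_emb \<phi> r = 0"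
  shows "exp_loss S (t u) r = exp_loss S (t w) r"
  using factF0[OF assms(1,3,4)] factF0[OF assms(2,3,4)] by simp

end



context setting begin

lemma rep:
  fixes y0 :: 'y
  defines "w0 \<equiv> \<phi> y0"
  shows "\<exists>B. (\<forall>u\<in>marginal_polytope \<phi>. B u \<in> span (range (\<lambda>y. \<phi> y - \<phi> y0)) \<and>
            (\<forall>y. S (t u) y - S (t u) y0 - (S (t w0) y - S (t w0) y0) = inner (B u) (\<phi> y - \<phi> y0)))
          \<and> continuous_on (marginal_polytope \<phi>) B"
proof -
  define M where "M = marginal_polytope \<phi>"
  define G where "G = range (\<lambda>y. \<phi> y - \<phi> y0)"
  define T :: "'h \<Rightarrow> real^'y" where "T x = (\<chi> y. inner x (\<phi> y - \<phi> y0))" for x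
  define \<beta> :: "'h \<Rightarrow> real^'y" where
    "\<beta> u = (\<chi> y. S (t u) y - S (t u) y0 - (S (t w0) y - S (t w0) y0))" for u
  have w0M: "w0 \<in> M" unfolding M_def marginal_polytope_def w0_def by (simp add: hull_inc)
  have linT: "linear T"
    unfolding T_def by (intro linearI) (auto simp: vec_eq_iff inner_add_left)
  have Tcomp: "T x $ y = inner x (\<phi> y - \<phi> y0)" for x y unfolding T_def by simp
  have T0: "T b = 0" if "\<And>w. w \<in> span G \<Longrightarrow> orthogonal b w" for b
  proof -
    have "inner b (\<phi> y - \<phi> y0) = 0" for y
      using that[of "\<phi> y - \<phi> y0"] unfolding G_def orthogonal_def
      by (simp add: span_base)
    then show ?thesis by (simp add: vec_eq_iff Tcomp)
  qed
  have injT: "inj_on T (span G)"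
  proof (rule inj_onI)
    fix x x' assume x: "x \<in> span G" and x': "x' \<in> span G" and e: "T x = T x'"
    define d where "d = x - x'"
    have dG: "d \<in> span G" unfolding d_def using x x' by (rule span_diff)
    have "T d = 0" unfolding d_def using e linear_diff[OF linT] by simp
    then have "orthogonal d g" if "g \<in> G" for g
      using that unfolding G_def orthogonal_def by (auto simp: vec_eq_iff Tcomp)
    then have "orthogonal d d" using orthogonal_to_span[OF dG] by blast
    then have "d = 0" by (simp add: orthogonal_def)
    then show "x = x'" by (simp add: d_def)
  qed
  obtain R where R: "range R \<subseteq> span G" "linear R" "\<forall>x\<in>span G. R (T x) = x"
    using linear_inj_on_left_inverse[OF linT injT] by blast
  have subT: "subspace (range T)" by (rule linear_subspace_image[OF linT subspace_UNIV])
  have \<beta>range: "\<beta> u \<in> T ` span G" if u: "u \<in> M" for u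
  proof -
    obtain yv z where yv: "yv \<in> span (range T)" and z: "\<And>w. w \<in> span (range T) \<Longrightarrow> orthogonal z w"
      and dec: "\<beta> u = yv + z"
      using orthogonal_subspace_decomp_exists[of "range T" "\<beta> u"] by blast
    have "span (range T) = range T" using subT by (simp only: span_eq_iff)
    with yv obtain x0 where x0: "yv = T x0" by auto
    obtain a b where a: "a \<in> span G" and b: "\<And>w. w \<in> span G \<Longrightarrow> orthogonal b w" and ab: "x0 = a + b"
      using orthogonal_subspace_decomp_exists[of G x0] by blast
    have Tx0: "T x0 = T a" using T0[OF b] ab linear_add[OF linT] by simp
    define wv where "wv = (\<Sum>y\<in>UNIV. (z $ y) *\<^sub>R (\<phi> y - \<phi> y0))"
    have wvG: "wv \<in> span G" unfolding wv_def G_def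
      by (intro span_sum span_scale span_base) auto
    have "orthogonal z (T wv)" using z[of "T wv"] subT by (simp add: span_base)
    then have "0 = (\<Sum>y\<in>UNIV. z $ y * inner wv (\<phi> y - \<phi> y0))"
      by (simp add: orthogonal_def inner_vec_def Tcomp)
    also have "\<dots> = inner wv wv"
    proof -
      have "inner wv wv = inner wv (\<Sum>y\<in>UNIV. (z $ y) *\<^sub>R (\<phi> y - \<phi> y0))"
        by (simp add: wv_def[symmetric])
      also have "\<dots> = (\<Sum>y\<in>UNIV. z $ y * inner wv (\<phi> y - \<phi> y0))"
        by (simp add: inner_sum_right)
      finally show ?thesis by simp
    qed
    finally have wv0: "wv = 0" by simp
    define r where "r y = z $ y - (if y = y0 then (\<Sum>y\<in>UNIV. z $ y) else 0)" for y
    have rs: "sum r UNIV = 0" unfolding r_def by (simp add: sum_subtractf)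
    have "mean_emb \<phi> r = wv"
    proof -
      define c where "c = (\<Sum>y\<in>UNIV. z $ y)"
      have e1: "(\<lambda>y. (if y = y0 then c else 0) *\<^sub>R \<phi> y) = (\<lambda>y. if y = y0 then c *\<^sub>R \<phi> y0 else 0)"
        by auto
      have "mean_emb \<phi> r = (\<Sum>y\<in>UNIV. z $ y *\<^sub>R \<phi> y) - (\<Sum>y\<in>UNIV. (if y = y0 then c else 0) *\<^sub>R \<phi> y)"
        unfolding r_def mean_emb_def c_def[symmetric] scaleR_diff_left sum_subtractf by (rule refl)
      also have "\<dots> = (\<Sum>y\<in>UNIV. z $ y *\<^sub>R \<phi> y) - c *\<^sub>R \<phi> y0"
        unfolding e1 by simp
      also have "\<dots> = wv"
        unfolding wv_def c_def scaleR_diff_right sum_subtractf scaleR_sum_left by (rule refl)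
      finally show ?thesis .
    qed
    with wv0 have rm: "mean_emb \<phi> r = 0" by simp
    have F: "exp_loss S (t u) r = exp_loss S (t w0) r" by (rule factF[OF u[unfolded M_def] w0M[unfolded M_def] rs rm])
    define \<Delta> where "\<Delta> y = S (t u) y - S (t w0) y" for y
    have "exp_loss S (t u) r - exp_loss S (t w0) r = (\<Sum>y\<in>UNIV. r y * \<Delta> y)"
      unfolding exp_loss_def \<Delta>_def by (simp add: sum_subtractf algebra_simps)
    also have "\<dots> = (\<Sum>y\<in>UNIV. z $ y * \<Delta> y) - (\<Sum>y\<in>UNIV. z $ y) * \<Delta> y0"
    proof -
      define c where "c = (\<Sum>y\<in>UNIV. z $ y)"
      have e1: "(\<lambda>y. (if y = y0 then c else 0) * \<Delta> y) = (\<lambda>y. if y = y0 then c * \<Delta> y0 else 0)"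
        by auto
      have "(\<Sum>y\<in>UNIV. r y * \<Delta> y) = (\<Sum>y\<in>UNIV. z $ y * \<Delta> y) - (\<Sum>y\<in>UNIV. (if y = y0 then c else 0) * \<Delta> y)"
        unfolding r_def c_def[symmetric] left_diff_distrib sum_subtractf by (rule refl)
      also have "\<dots> = (\<Sum>y\<in>UNIV. z $ y * \<Delta> y) - c * \<Delta> y0"
        unfolding e1 by simp
      finally show ?thesis by (simp add: c_def)
    qed
    also have "\<dots> = (\<Sum>y\<in>UNIV. z $ y * (\<Delta> y - \<Delta> y0))"
      by (simp add: right_diff_distrib sum_subtractf sum_distrib_left sum_distrib_right mult.commute)
    also have "\<dots> = inner (\<beta> u) z"
      unfolding inner_vec_def \<beta>_def \<Delta>_def by (simp add: algebra_simps)
    finally have bz: "inner (\<beta> u) z = 0" using F by simp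
    have "orthogonal z yv" using z yv by blast
    then have o1: "inner z yv = 0" by (simp add: orthogonal_def)
    have "inner z z = inner (\<beta> u) z - inner z yv" unfolding dec by (simp add: inner_add_left inner_add_right inner_commute[of yv z])
    then have "inner z z = 0" using bz o1 by simp
    then have "z = 0" by simp
    then have "\<beta> u = T a" using dec x0 Tx0 by simp
    then show ?thesis using a by blast
  qed
  define B where "B u = R (\<beta> u)" for u
  have "B u \<in> span G \<and> (\<forall>y. S (t u) y - S (t u) y0 - (S (t w0) y - S (t w0) y0) = inner (B u) (\<phi> y - \<phi> y0))"
    if uM: "u \<in> M" for u
  proof -
    obtain a where a: "a \<in> span G" "\<beta> u = T a" using \<beta>range[OF uM] by blast
    have "B u = a" unfolding B_def using a R(3) by simp
    moreover have "S (t u) y - S (t u) y0 - (S (t w0) y - S (t w0) y0) = inner (B u) (\<phi> y - \<phi> y0)" for y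
      using arg_cong[OF a(2), of "\<lambda>v. v $ y"] \<open>B u = a\<close> by (simp add: \<beta>_def Tcomp)
    ultimately show ?thesis using a by auto
  qed
  moreover have "continuous_on M B"
  proof -
    have c\<beta>: "continuous_on M \<beta>"
    proof -
      have "continuous_on M (\<lambda>m. S (t m) y)" for y
        unfolding M_def by (rule continuous_on_compose2[OF S_cont t_cont]) auto
      then show ?thesis unfolding \<beta>_def
        by (intro continuous_on_vec_lambda continuous_on_diff continuous_on_const) auto
    qed
    have "continuous_on UNIV R"
      using R(2) by (intro linear_continuous_on) (simp add: linear_conv_bounded_linear)
    then show ?thesis unfolding B_def o_def[symmetric]
      by (intro continuous_on_compose c\<beta>) (auto intro: continuous_on_subset)
  qed
  ultimately show ?thesis unfolding M_def G_def by blast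
qed

end



context setting begin

lemma INF_eq: "prob_dist q \<Longrightarrow> (INF v'. exp_loss S v' q) = exp_loss S (t (mean_emb \<phi> q)) q"
  by (rule cInf_eq_minimum) (auto intro: opt)

lemma main:
  "\<exists>(h :: 'h \<Rightarrow> real) (g :: 'h \<Rightarrow> 'h).
           strict_convex_on (marginal_polytope \<phi>) h
         \<and> (\<forall>u\<in>marginal_polytope \<phi>.
               g u \<in> span ((\<lambda>x. x - u) ` marginal_polytope \<phi>)
             \<and> (h has_derivative (\<lambda>d. inner (g u) d)) (at u within marginal_polytope \<phi>))
         \<and> (\<forall>u\<in>marginal_polytope \<phi>. \<forall>q. prob_dist q \<longrightarrow>
               regret S (t u) q = bregman h g (mean_emb \<phi> q) u)"
proof -
  define M where "M = marginal_polytope \<phi>"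
  obtain y0 :: 'y where True by blast
  obtain B where Bspan: "\<forall>u\<in>M. B u \<in> span (range (\<lambda>y. \<phi> y - \<phi> y0))"
    and Beq: "\<forall>u\<in>M. \<forall>y. S (t u) y - S (t u) y0 - (S (t (\<phi> y0)) y - S (t (\<phi> y0)) y0) = inner (B u) (\<phi> y - \<phi> y0)"
    and Bc: "continuous_on M B"
    using rep[of y0] unfolding M_def by blast
  define \<Delta> where "\<Delta> u y = S (t u) y - S (t (\<phi> y0)) y" for u y
  define \<Lambda> where "\<Lambda> u m = \<Delta> u y0 + inner (B u) (m - \<phi> y0)" for u m
  define h where "h m = - \<Lambda> m m" for m
  define g where "g u = - B u" for u
  have mM: "mean_emb \<phi> q \<in> M" if "prob_dist q" for q
    using that unfolding M_def M_eq by auto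
  have I1: "exp_loss S (t u) q = exp_loss S (t (\<phi> y0)) q + \<Lambda> u (mean_emb \<phi> q)"
    if u: "u \<in> M" and q: "prob_dist q" for u q
  proof -
    define c where "c = \<Delta> u y0"
    have d: "\<Delta> u y = c + inner (B u) (\<phi> y - \<phi> y0)" for y
      using Beq u unfolding \<Delta>_def c_def by (auto simp: algebra_simps)
    have "exp_loss S (t u) q - exp_loss S (t (\<phi> y0)) q = (\<Sum>y\<in>UNIV. q y * \<Delta> u y)"
      unfolding exp_loss_def \<Delta>_def by (simp add: sum_subtractf right_diff_distrib)
    also have "\<dots> = (\<Sum>y\<in>UNIV. q y * c + inner (B u) (q y *\<^sub>R (\<phi> y - \<phi> y0)))"
      unfolding d by (simp add: distrib_left)
    also have "\<dots> = (\<Sum>y\<in>UNIV. q y) * c + inner (B u) (\<Sum>y\<in>UNIV. q y *\<^sub>R (\<phi> y - \<phi> y0))"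
      by (simp add: sum.distrib sum_distrib_right inner_sum_right)
    also have "(\<Sum>y\<in>UNIV. q y *\<^sub>R (\<phi> y - \<phi> y0)) = mean_emb \<phi> q - (\<Sum>y\<in>UNIV. q y) *\<^sub>R \<phi> y0"
      unfolding mean_emb_def scaleR_diff_right sum_subtractf scaleR_sum_left by (rule refl)
    finally show ?thesis using q unfolding prob_dist_def \<Lambda>_def c_def by simp
  qed
  have reg: "regret S (t u) q = \<Lambda> u (mean_emb \<phi> q) - \<Lambda> (mean_emb \<phi> q) (mean_emb \<phi> q)"
    if "u \<in> M" "prob_dist q" for u q
    unfolding regret_def INF_eq[OF that(2)] I1[OF that] I1[OF mM[OF that(2)] that(2)] by simp
  have breg: "bregman h g m u = \<Lambda> u m - \<Lambda> m m" for m u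
    unfolding bregman_def h_def g_def \<Lambda>_def
    by (simp add: inner_diff_right inner_diff_left inner_commute algebra_simps)
  have bpos: "bregman h g m u \<ge> 0" and bstrict: "m \<noteq> u \<Longrightarrow> bregman h g m u > 0"
    if u: "u \<in> M" and m: "m \<in> M" for m u
  proof -
    obtain q where q: "prob_dist q" "m = mean_emb \<phi> q" using m unfolding M_def M_eq by auto
    have e: "bregman h g m u = exp_loss S (t u) q - exp_loss S (t m) q"
      unfolding breg q(2) I1[OF u q(1)] I1[OF mM[OF q(1)] q(1)] by simp
    show "bregman h g m u \<ge> 0" using opt[OF q(1), of "t u"] unfolding e by (simp add: q(2))
    assume "m \<noteq> u"
    then have "t u \<noteq> t m" using t_inj u m unfolding M_def inj_on_def by metis
    then show "bregman h g m u > 0" using t_min[OF q(1), of "t u"] unfolding e by (simp add: q(2))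
  qed
  have conv: "convex M" unfolding M_def marginal_polytope_def by simp
  have sc: "strict_convex_on M h"
    unfolding strict_convex_on_def
  proof (intro conjI conv ballI impI allI)
    fix x y :: 'h and a :: real
    assume x: "x \<in> M" and y: "y \<in> M" and xy: "x \<noteq> y" and a: "0 < a \<and> a < 1"
    define z where "z = a *\<^sub>R x + (1 - a) *\<^sub>R y"
    have z: "z \<in> M" unfolding z_def using convexD[OF conv x y] a by auto
    have zx: "z - x = (1 - a) *\<^sub>R (y - x)" unfolding z_def by (simp add: algebra_simps)
    have zy: "z - y = a *\<^sub>R (x - y)" unfolding z_def by (simp add: algebra_simps)
    have "z \<noteq> x" using zx xy a by auto
    have "z \<noteq> y" using zy xy a by auto
    have b1: "h x - h z - inner (x - z) (g z) > 0"
      using bstrict[OF z x \<open>z \<noteq> x\<close>[symmetric]] unfolding bregman_def .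
    have b2: "h y - h z - inner (y - z) (g z) > 0"
      using bstrict[OF z y \<open>z \<noteq> y\<close>[symmetric]] unfolding bregman_def .
    have s0: "a *\<^sub>R (x - z) + (1 - a) *\<^sub>R (y - z) = 0" unfolding z_def by (simp add: algebra_simps)
    have "a * inner (x - z) (g z) + (1 - a) * inner (y - z) (g z) = 0"
      using arg_cong[OF s0, of "\<lambda>v. inner v (g z)"] by (simp add: inner_add_left)
    moreover have "a * (h x - h z - inner (x - z) (g z)) > 0" using b1 a by simp
    moreover have "(1 - a) * (h y - h z - inner (y - z) (g z)) > 0" using b2 a by simp
    ultimately have "h z < a * h x + (1 - a) * h y" by (simp add: algebra_simps)
    then show "h (a *\<^sub>R x + (1 - a) *\<^sub>R y) < a * h x + (1 - a) * h y" by (simp add: z_def)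
  qed
  have gc: "continuous_on M g" unfolding g_def using Bc by (intro continuous_on_minus)
  have deriv: "(h has_derivative (\<lambda>d. inner (g u) d)) (at u within M)" if u: "u \<in> M" for u
    unfolding has_derivative_within
  proof (intro conjI)
    show "bounded_linear (\<lambda>d. inner (g u) d)" by (rule bounded_linear_inner_right)
    have lim: "((\<lambda>y. norm (g y - g u)) \<longlongrightarrow> 0) (at u within M)"
    proof -
      have "(g \<longlongrightarrow> g u) (at u within M)"
        using gc u by (simp add: continuous_on_def)
      then have "((\<lambda>y. g y - g u) \<longlongrightarrow> 0) (at u within M)"
        using tendsto_diff[OF _ tendsto_const, of g "g u" _ "g u"] by simp
      then show ?thesis by (rule tendsto_norm_zero)
    qed
    show "((\<lambda>y. (1 / norm (y - u)) *\<^sub>R (h y - (h u + inner (g u) (y - u)))) \<longlongrightarrow> 0) (at u within M)"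
    proof (rule Lim_null_comparison[OF _ lim])
      have "norm ((1 / norm (y - u)) *\<^sub>R (h y - (h u + inner (g u) (y - u)))) \<le> norm (g y - g u)"
        if y: "y \<in> M" for y
      proof -
        have b0: "0 \<le> bregman h g y u" by (rule bpos[OF u y])
        have b1: "0 \<le> bregman h g u y" by (rule bpos[OF y u])
        have sum: "bregman h g y u + bregman h g u y = inner (y - u) (g y - g u)"
          unfolding bregman_def by (simp add: inner_diff_left inner_diff_right inner_commute algebra_simps)
        have cs: "inner (y - u) (g y - g u) \<le> norm (y - u) * norm (g y - g u)"
          by (rule norm_cauchy_schwarz)
        have e: "h y - (h u + inner (g u) (y - u)) = bregman h g y u"
          unfolding bregman_def by (simp add: inner_commute)
        have le: "bregman h g y u \<le> norm (y - u) * norm (g y - g u)" using b1 sum cs by linarith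
        show ?thesis
        proof (cases "y = u")
          case True then show ?thesis by simp
        next
          case False
          then have np: "norm (y - u) > 0" by simp
          have "norm ((1 / norm (y - u)) *\<^sub>R (h y - (h u + inner (g u) (y - u))))
              = bregman h g y u / norm (y - u)" unfolding e using b0 np by simp
          also have "\<dots> \<le> norm (g y - g u)" using le np by (simp add: divide_le_eq mult.commute)
          finally show ?thesis .
        qed
      qed
      then show "\<forall>\<^sub>F y in at u within M. norm ((1 / norm (y - u)) *\<^sub>R (h y - (h u + inner (g u) (y - u)))) \<le> norm (g y - g u)"
        by (auto simp: eventually_at_filter)
    qed
  qed
  have gspan: "g u \<in> span ((\<lambda>x. x - u) ` M)" if u: "u \<in> M" for u
  proof -
    have sub: "range (\<lambda>y. \<phi> y - \<phi> y0) \<subseteq> span ((\<lambda>x. x - u) ` M)"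
    proof
      fix v assume "v \<in> range (\<lambda>y. \<phi> y - \<phi> y0)"
      then obtain y where v: "v = \<phi> y - \<phi> y0" by auto
      have "\<phi> z \<in> M" for z unfolding M_def marginal_polytope_def by (simp add: hull_inc)
      then have "\<phi> y - u \<in> (\<lambda>x. x - u) ` M" "\<phi> y0 - u \<in> (\<lambda>x. x - u) ` M" by auto
      then have "(\<phi> y - u) - (\<phi> y0 - u) \<in> span ((\<lambda>x. x - u) ` M)"
        by (intro span_diff span_base)
      then show "v \<in> span ((\<lambda>x. x - u) ` M)" by (simp add: v)
    qed
    have "B u \<in> span ((\<lambda>x. x - u) ` M)"
      using Bspan u span_minimal[OF sub subspace_span] by blast
    then show ?thesis unfolding g_def by (rule span_neg)
  qed
  have r3: "\<forall>u\<in>M. \<forall>q. prob_dist q \<longrightarrow> regret S (t u) q = bregman h g (mean_emb \<phi> q) u"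
    using reg breg by simp
  show ?thesis unfolding M_def[symmetric]
  proof (intro exI[of _ h] exI[of _ g] conjI ballI)
    show "strict_convex_on M h" by (rule sc)
    show "g u \<in> span ((\<lambda>x. x - u) ` M)" if "u \<in> M" for u using gspan that .
    show "(h has_derivative (\<lambda>d. inner (g u) d)) (at u within M)" if "u \<in> M" for u using deriv that .
    show "\<forall>q. prob_dist q \<longrightarrow> regret S (t u) q = bregman h g (mean_emb \<phi> q) u" if "u \<in> M" for u
      using r3 that by blast
  qed
qed

end

theorem theorem3p1:
  fixes \<phi> :: "'y::finite \<Rightarrow> 'h::euclidean_space"
    and S :: "'v::euclidean_space \<Rightarrow> 'y \<Rightarrow> real"
    and t :: "'h \<Rightarrow> 'v"
  assumes S_cont: "\<And>y. continuous_on UNIV (\<lambda>v. S v y)"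
    and t_cont: "continuous_on (marginal_polytope \<phi>) t"
    and t_inj: "inj_on t (marginal_polytope \<phi>)"
    and t_min: "\<And>q v. prob_dist q \<Longrightarrow> v \<noteq> t (mean_emb \<phi> q) \<Longrightarrow>
                  exp_loss S (t (mean_emb \<phi> q)) q < exp_loss S v q"
  shows "\<exists>(h :: 'h \<Rightarrow> real) (g :: 'h \<Rightarrow> 'h).
           strict_convex_on (marginal_polytope \<phi>) h
         \<and> (\<forall>u\<in>marginal_polytope \<phi>.
               g u \<in> span ((\<lambda>x. x - u) ` marginal_polytope \<phi>)
             \<and> (h has_derivative (\<lambda>d. inner (g u) d)) (at u within marginal_polytope \<phi>))
         \<and> (\<forall>u\<in>marginal_polytope \<phi>. \<forall>q. prob_dist q \<longrightarrow>
               regret S (t u) q = bregman h g (mean_emb \<phi> q) u)"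
proof -
  interpret setting \<phi> S t using assms by unfold_locales
  show ?thesis by (rule main)
qed


end
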